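(* Let $\Delta$ be a metrizable Choquet simplex, $G$ a countable abelian group, and $\psi\colon G\to\mathrm{Aff}(\Delta)$ a homomorphism whose image contains the constant function $1$. Make $G$ a partially ordered group with positive cone $G_+=\{g\in G:\psi(g)(x)>0\text{ for all }x\in\Delta\}\cup\{0\}$, and take as order unit any $g_0\in G$ with $\psi(g_0)=1$. Then every state on $(G,G_+,g_0)$ (an order preserving homomorphism $\omega\colon G\to\mathbb{R}$ with $\omega(g_0)=1$) is of the form $g\mapsto\psi(g)(x)$ for some $x\in\Delta$.
   Context: $\mathrm{Aff}(\Delta)$ denotes the space of continuous affine real valued functions on $\Delta$. *)

theory Defs
  imports "HOL-Analysis.Analysis"
begin

text \<open>The cone over a convex set K in V, sitting in V \<times> real:
  C = {(t x, t) | t \<ge> 0, x \<in> K}, ordered by u \<le> v iff v - u \<in> C.\<close>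
definition simplex_cone :: "'a::real_vector set \<Rightarrow> ('a \<times> real) set" where
  "simplex_cone K = {(t *\<^sub>R x, t) | t x. t \<ge> 0 \<and> x \<in> K}"

text \<open>Choquet simplex (Choquet--Meyer): a nonempty compact convex set whose cone
  is a lattice in its own ordering (every pair has a supremum and an infimum in C).\<close>
definition choquet_simplex :: "'a::real_normed_vector set \<Rightarrow> bool" where
  "choquet_simplex K \<longleftrightarrow> K \<noteq> {} \<and> compact K \<and> convex K \<and>
     (let C = simplex_cone K in
       \<forall>u\<in>C. \<forall>v\<in>C.
         (\<exists>w\<in>C. w - u \<in> C \<and> w - v \<in> C \<and> (\<forall>z\<in>C. z - u \<in> C \<and> z - v \<in> C \<longrightarrow> z - w \<in> C)) \<and>
         (\<exists>w\<in>C. u - w \<in> C \<and> v - w \<in> C \<and> (\<forall>z\<in>C. u - z \<in> C \<and> v - z \<in> C \<longrightarrow> w - z \<in> C)))"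

definition aff_on :: "'a::real_normed_vector set \<Rightarrow> ('a \<Rightarrow> real) \<Rightarrow> bool" where
  "aff_on K f \<longleftrightarrow> continuous_on K f \<and>
     (\<forall>x\<in>K. \<forall>y\<in>K. \<forall>t::real. 0 \<le> t \<and> t \<le> 1 \<longrightarrow>
        f ((1 - t) *\<^sub>R x + t *\<^sub>R y) = (1 - t) * f x + t * f y)"

definition pos_cone :: "'a set \<Rightarrow> ('g::ab_group_add \<Rightarrow> 'a \<Rightarrow> real) \<Rightarrow> 'g set" where
  "pos_cone K \<psi> = {g. \<forall>x\<in>K. \<psi> g x > 0} \<union> {0}"

definition is_state :: "'g::ab_group_add set \<Rightarrow> 'g \<Rightarrow> ('g \<Rightarrow> real) \<Rightarrow> bool" where
  "is_state P g0 \<omega> \<longleftrightarrow> (\<forall>g h. \<omega> (g + h) = \<omega> g + \<omega> h) \<and>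
     (\<forall>g h. h - g \<in> P \<longrightarrow> \<omega> g \<le> \<omega> h) \<and> \<omega> g0 = 1"

end

theory Submission
  imports Defs
begin

fun nsc :: "nat \<Rightarrow> 'g::ab_group_add \<Rightarrow> 'g" where
  "nsc 0 g = 0"
| "nsc (Suc n) g = g + nsc n g"

definition zsc :: "int \<Rightarrow> 'g::ab_group_add \<Rightarrow> 'g" where
  "zsc k g = (if k \<ge> 0 then nsc (nat k) g else - nsc (nat (-k)) g)"

lemma hom_basic:
  fixes f :: "'g::ab_group_add \<Rightarrow> real"
  assumes "\<And>a b. f (a + b) = f a + f b"
  shows "f 0 = 0" "f (- a) = - f a" "f (a - b) = f a - f b"
proof -
  show f0: "f 0 = 0" using assms[of 0 0] by simp
  show "f (- a) = - f a" using assms[of a "-a"] f0 by simp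
  show "f (a - b) = f a - f b" using assms[of "a - b" b] by simp
qed

lemma hom_nsc:
  fixes f :: "'g::ab_group_add \<Rightarrow> real"
  assumes "\<And>a b. f (a + b) = f a + f b"
  shows "f (nsc n g) = real n * f g"
  by (induction n) (auto simp: assms hom_basic[OF assms] algebra_simps)

lemma hom_zsc:
  fixes f :: "'g::ab_group_add \<Rightarrow> real"
  assumes "\<And>a b. f (a + b) = f a + f b"
  shows "f (zsc k g) = of_int k * f g"
  by (auto simp: zsc_def hom_nsc[OF assms] hom_basic[OF assms])

lemma hom_sum:
  fixes f :: "'g::ab_group_add \<Rightarrow> real"
  assumes "\<And>a b. f (a + b) = f a + f b"
  shows "f (sum h F) = (\<Sum>i\<in>F. f (h i))"
  by (induction F rule: infinite_finite_induct) (auto simp: assms hom_basic[OF assms])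

lemma finite_case:
  fixes K :: "'a::real_normed_vector set"
    and \<psi> :: "'g::ab_group_add \<Rightarrow> 'a \<Rightarrow> real"
  assumes cK: "compact K" and cvK: "convex K" and neK: "K \<noteq> {}"
    and aff: "\<forall>g. aff_on K (\<psi> g)"
    and add: "\<forall>g h. \<forall>x\<in>K. \<psi> (g + h) x = \<psi> g x + \<psi> h x"
    and g0: "\<forall>x\<in>K. \<psi> g0 x = 1"
    and st: "is_state (pos_cone K \<psi>) g0 \<omega>"
    and fF: "finite F"
  shows "\<exists>x\<in>K. \<forall>g\<in>F. \<psi> g x = \<omega> g"
proof (rule ccontr)
  assume nex: "\<not> ?thesis"
  have cont: "\<And>g. continuous_on K (\<psi> g)" using aff by (simp add: aff_on_def)
  have affe: "\<And>g x y t. x \<in> K \<Longrightarrow> y \<in> K \<Longrightarrow> 0 \<le> t \<Longrightarrow> t \<le> 1 \<Longrightarrow>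
      \<psi> g ((1 - t) *\<^sub>R x + t *\<^sub>R y) = (1 - t) * \<psi> g x + t * \<psi> g y"
    using aff by (simp add: aff_on_def)
  have wadd: "\<And>a b. \<omega> (a + b) = \<omega> a + \<omega> b" using st by (simp add: is_state_def)
  have wmono: "\<And>a b. b - a \<in> pos_cone K \<psi> \<Longrightarrow> \<omega> a \<le> \<omega> b" using st by (simp add: is_state_def)
  have w0: "\<omega> g0 = 1" using st by (simp add: is_state_def)
  have padd: "\<And>x a b. x \<in> K \<Longrightarrow> (\<lambda>g. \<psi> g x) (a + b) = (\<lambda>g. \<psi> g x) a + (\<lambda>g. \<psi> g x) b"
    using add by simp
  define d where "d x = (\<Sum>g\<in>F. (\<omega> g - \<psi> g x)^2)" for x
  have contd: "continuous_on K d" unfolding d_def by (intro continuous_intros cont)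
  obtain x0 where x0: "x0 \<in> K" "\<And>x. x \<in> K \<Longrightarrow> d x0 \<le> d x"
    using continuous_attains_inf[OF cK neK contd] by blast
  define c where "c g = \<omega> g - \<psi> g x0" for g
  define \<delta> where "\<delta> = (\<Sum>g\<in>F. (c g)^2)"
  have dx0: "d x0 = \<delta>" by (simp add: d_def \<delta>_def c_def)
  obtain g1 where g1: "g1 \<in> F" "\<psi> g1 x0 \<noteq> \<omega> g1" using nex x0(1) by blast
  have "(c g1)^2 \<le> \<delta>" unfolding \<delta>_def by (rule member_le_sum[OF g1(1) _ fF]) simp
  moreover have "(c g1)^2 > 0" using g1 by (simp add: c_def)
  ultimately have dpos: "\<delta> > 0" by linarith
  have key: "(\<Sum>g\<in>F. c g * (\<psi> g x - \<psi> g x0)) \<le> 0" if xK: "x \<in> K" for x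
  proof (rule ccontr)
    define u where "u g = \<psi> g x - \<psi> g x0" for g
    define S where "S = (\<Sum>g\<in>F. c g * u g)"
    define U where "U = (\<Sum>g\<in>F. (u g)^2)"
    assume "\<not> ?thesis"
    hence Spos: "S > 0" by (simp add: S_def u_def)
    have U0: "U \<ge> 0" unfolding U_def by (intro sum_nonneg) simp
    define t where "t = min 1 (S / (U + 1))"
    have t0: "t > 0" using Spos U0 by (simp add: t_def)
    have t1: "t \<le> 1" by (simp add: t_def)
    define z where "z = (1 - t) *\<^sub>R x0 + t *\<^sub>R x"
    have zK: "z \<in> K" using cvK x0(1) xK t0 t1 unfolding z_def convex_def by auto
    have pz: "\<psi> g z = \<psi> g x0 + t * u g" for g
      using affe[OF x0(1) xK, of t g] t0 t1 by (simp add: z_def u_def algebra_simps)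
    have "d z = (\<Sum>g\<in>F. (c g)^2 - 2 * t * (c g * u g) + t^2 * (u g)^2)"
      unfolding d_def by (intro sum.cong refl) (simp add: pz c_def power2_eq_square algebra_simps)
    also have "\<dots> = \<delta> - 2 * t * S + t^2 * U"
      by (simp add: sum.distrib sum_subtractf sum_distrib_left \<delta>_def S_def U_def)
    finally have dz: "d z = \<delta> - 2 * t * S + t^2 * U" .
    have "\<delta> \<le> d z" using x0(2)[OF zK] dx0 by simp
    hence "2 * t * S \<le> t * (t * U)" using dz by (simp add: power2_eq_square)
    hence A: "2 * S \<le> t * U" using t0 by simp
    have "t * U \<le> S / (U + 1) * U" using U0 by (intro mult_right_mono) (auto simp: t_def)
    also have "\<dots> < S" using Spos U0 by (simp add: field_simps)
    finally show False using A Spos by linarith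
  qed
  have sep: "(\<Sum>g\<in>F. c g * (\<omega> g - \<psi> g x)) \<ge> \<delta>" if xK: "x \<in> K" for x
  proof -
    have "(\<Sum>g\<in>F. c g * (\<omega> g - \<psi> g x)) = \<delta> - (\<Sum>g\<in>F. c g * (\<psi> g x - \<psi> g x0))"
      unfolding \<delta>_def by (simp add: sum_subtractf[symmetric] power2_eq_square c_def algebra_simps)
    thus ?thesis using key[OF xK] by simp
  qed
  define E where "E x = (\<Sum>g\<in>F. \<bar>\<omega> g - \<psi> g x\<bar>)" for x
  have contE: "continuous_on K E" unfolding E_def by (intro continuous_intros cont)
  obtain xm where xm: "xm \<in> K" "\<And>x. x \<in> K \<Longrightarrow> E x \<le> E xm"
    using continuous_attains_sup[OF cK neK contE] by blast
  define M where "M = E xm"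
  have M0: "M \<ge> 0" unfolding M_def E_def by (intro sum_nonneg) simp
  define D where "D = (M + 2) / \<delta>"
  define k where "k g = \<lfloor>D * c g\<rfloor>" for g
  have gap: "(\<Sum>g\<in>F. of_int (k g) * (\<omega> g - \<psi> g x)) \<ge> 2" if xK: "x \<in> K" for x
  proof -
    have eq: "(\<Sum>g\<in>F. of_int (k g) * (\<omega> g - \<psi> g x)) =
        D * (\<Sum>g\<in>F. c g * (\<omega> g - \<psi> g x)) + (\<Sum>g\<in>F. (of_int (k g) - D * c g) * (\<omega> g - \<psi> g x))"
      by (simp add: sum_distrib_left sum.distrib[symmetric] algebra_simps)
    have b: "(\<Sum>g\<in>F. (of_int (k g) - D * c g) * (\<omega> g - \<psi> g x)) \<ge> - E x"
    proof -
      have "(\<Sum>g\<in>F. (of_int (k g) - D * c g) * (\<omega> g - \<psi> g x)) \<ge> (\<Sum>g\<in>F. - \<bar>\<omega> g - \<psi> g x\<bar>)"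
      proof (intro sum_mono)
        fix g
        have "\<bar>of_int (k g) - D * c g\<bar> \<le> 1" unfolding k_def
          using of_int_floor_le[of "D * c g"] real_of_int_floor_gt_diff_one[of "D * c g"] by linarith
        hence "\<bar>(of_int (k g) - D * c g) * (\<omega> g - \<psi> g x)\<bar> \<le> \<bar>\<omega> g - \<psi> g x\<bar>"
          by (simp add: abs_mult mult_left_le_one_le)
        thus "- \<bar>\<omega> g - \<psi> g x\<bar> \<le> (of_int (k g) - D * c g) * (\<omega> g - \<psi> g x)" by linarith
      qed
      thus ?thesis by (simp add: E_def sum_negf)
    qed
    have "D * (\<Sum>g\<in>F. c g * (\<omega> g - \<psi> g x)) \<ge> D * \<delta>"
      using sep[OF xK] dpos M0 by (intro mult_left_mono) (auto simp: D_def)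
    moreover have "D * \<delta> = M + 2" using dpos by (simp add: D_def)
    moreover have "E x \<le> M" using xm(2)[OF xK] by (simp add: M_def)
    ultimately show ?thesis using eq b by linarith
  qed
  define h where "h = (\<Sum>g\<in>F. zsc (k g) g)"
  have wh: "\<omega> h = (\<Sum>g\<in>F. of_int (k g) * \<omega> g)"
    unfolding h_def by (simp only: hom_sum[of \<omega>, OF wadd] hom_zsc[of \<omega>, OF wadd])
  have ph: "\<psi> h x = (\<Sum>g\<in>F. of_int (k g) * \<psi> g x)" if xK: "x \<in> K" for x
    using hom_sum[of "\<lambda>g. \<psi> g x", OF padd[OF xK], of "\<lambda>g. zsc (k g) g" F]
      hom_zsc[of "\<lambda>g. \<psi> g x", OF padd[OF xK]] unfolding h_def by simp
  have gap2: "\<omega> h - \<psi> h x \<ge> 2" if xK: "x \<in> K" for x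
    using gap[OF xK] wh ph[OF xK] by (simp add: sum_subtractf[symmetric] algebra_simps)
  define p where "p = \<lceil>\<omega> h\<rceil> - 1"
  have plt: "of_int p < \<omega> h" unfolding p_def using ceiling_correct[of "\<omega> h"] by linarith
  have pge: "of_int p \<ge> \<omega> h - 1" unfolding p_def using le_of_int_ceiling[of "\<omega> h"] by linarith
  have "zsc p g0 - h \<in> pos_cone K \<psi>"
  proof -
    have "\<psi> (zsc p g0 - h) x > 0" if xK: "x \<in> K" for x
    proof -
      have "\<psi> (zsc p g0 - h) x = \<psi> (zsc p g0) x - \<psi> h x"
        using hom_basic(3)[of "\<lambda>g. \<psi> g x", OF padd[OF xK]] by simp
      also have "\<dots> = of_int p - \<psi> h x"
        using hom_zsc[of "\<lambda>g. \<psi> g x", OF padd[OF xK]] g0 xK by simp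
      finally show ?thesis using gap2[OF xK] pge by linarith
    qed
    thus ?thesis by (simp add: pos_cone_def)
  qed
  hence "\<omega> h \<le> \<omega> (zsc p g0)" by (rule wmono)
  also have "\<dots> = of_int p" using hom_zsc[of \<omega>, OF wadd] w0 by simp
  finally show False using plt by linarith
qed

theorem lemma5p2:
  fixes K :: "'a::real_normed_vector set"
    and \<psi> :: "'g::ab_group_add \<Rightarrow> 'a \<Rightarrow> real"
    and g0 :: 'g and \<omega> :: "'g \<Rightarrow> real"
  assumes "choquet_simplex K"
    and "countable (UNIV :: 'g set)"
    and "\<forall>g. aff_on K (\<psi> g)"
    and "\<forall>g h. \<forall>x\<in>K. \<psi> (g + h) x = \<psi> g x + \<psi> h x"
    and "\<exists>g. \<forall>x\<in>K. \<psi> g x = 1"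
    and "\<forall>x\<in>K. \<psi> g0 x = 1"
    and "is_state (pos_cone K \<psi>) g0 \<omega>"
  shows "\<exists>x\<in>K. \<forall>g. \<omega> g = \<psi> g x"
proof -
  have cK: "compact K" and cvK: "convex K" and neK: "K \<noteq> {}"
    using assms(1) by (auto simp: choquet_simplex_def)
  have clK: "closed K" using cK by (rule compact_imp_closed)
  have cont: "\<And>g. continuous_on K (\<psi> g)" using assms(3) by (simp add: aff_on_def)
  define S where "S g = {x \<in> K. \<psi> g x = \<omega> g}" for g
  have "K \<inter> \<Inter>(range S) \<noteq> {}"
  proof (rule compact_imp_fip[OF cK])
    fix T assume "T \<in> range S"
    then obtain g where "T = S g" by blast
    thus "closed T" unfolding S_def by (rule ssubst) (rule continuous_closed_preimage_constant[OF cont clK])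
  next
    fix F' assume F': "finite F'" "F' \<subseteq> range S"
    then obtain F where F: "finite F" "F' = S ` F" using finite_subset_image by metis
    obtain x where "x \<in> K" "\<forall>g\<in>F. \<psi> g x = \<omega> g"
      using finite_case[OF cK cvK neK assms(3) assms(4) assms(6) assms(7) F(1)] by blast
    thus "K \<inter> \<Inter>F' \<noteq> {}" using F(2) by (auto simp: S_def)
  qed
  then obtain x where "x \<in> K" "\<And>g. x \<in> S g" by blast
  hence "\<forall>g. \<omega> g = \<psi> g x" by (simp add: S_def)
  with \<open>x \<in> K\<close> show ?thesis by blast
qed

end
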